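(* Let $\mathcal{H}=\mathbb{C}^d$ with orthonormal classical basis $\{|0\rangle,\dots,|d-1\rangle\}$, and let $U_{CD}$ be the unitary on $\mathbb{C}^d\otimes\mathbb{C}^d$ given by $U_{CD}|i,j\rangle=|i,\,j\oplus_d i\rangle$ (so $U_{CD}|i\rangle|0\rangle=|i\rangle|i\rangle$). For every density matrix $\rho$ on $\mathbb{C}^d$, the output $\rho'=U_{CD}(\rho\otimes|0\rangle\langle0|)U_{CD}^\dagger$ satisfies $S_N(\rho')=N_S(\rho)$. In particular $\rho'$ is entangled if and only if $\rho$ is nonclassical, and if $\hat M$ is a Hermitian operator on $\mathbb{C}^d$ with $\mathrm{Tr}(\hat M\rho)>\max_i\langle i|\hat M|i\rangle$, then $\rho'$ is entangled.
   Context: $\oplus_d$ denotes addition modulo $d$. The superposition number $r(\psi)$ of a pure state $|\psi\rangle=\sum_i c_i|i\rangle$ is the number of nonzero coefficients $c_i$; for a mixed state, $N_S(\rho)=\inf\{\sup_i r(\psi_i):\rho=\sum_ip_i|\psi_i\rangle\langle\psi_i|\}$, the infimum over all decompositions of $\rho$ into pure states with $p_i>0$. The Schmidt rank $r(\Psi)$ of a pure bipartite state is the number of nonzero coefficients in its Schmidt decomposition, and the Schmidt number of a bipartite mixed state is $S_N(\rho)=\inf\{\sup_i r(\Psi_i):\rho=\sum_ip_i|\Psi_i\rangle\langle\Psi_i|\}$. Classical single-system states are those with $N_S=1$ (convex combinations of the $|i\rangle\langle i|$); a bipartite state is entangled iff its Schmidt number exceeds 1. *)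

theory Defs
  imports Complex_Main "Jordan_Normal_Form.Matrix"
begin

text \<open>Conventions: C^d vectors are complex vec of dimension d (classical basis = standard
basis); C^d (x) C^d is C^(d*d) with |i,j> the basis vector of index i*d+j.\<close>

definition cinner :: "nat \<Rightarrow> complex vec \<Rightarrow> complex vec \<Rightarrow> complex" where
  "cinner n x y = (\<Sum>i<n. cnj (x $ i) * y $ i)"

definition adj :: "complex mat \<Rightarrow> complex mat" where
  "adj A = mat (dim_col A) (dim_row A) (\<lambda>(i,j). cnj (A $$ (j,i)))"

definition hermitian :: "nat \<Rightarrow> complex mat \<Rightarrow> bool" where
  "hermitian n A \<longleftrightarrow> A \<in> carrier_mat n n \<and> adj A = A"

definition mtrace :: "complex mat \<Rightarrow> complex" where
  "mtrace A = (\<Sum>i<dim_row A. A $$ (i,i))"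

definition density :: "nat \<Rightarrow> complex mat \<Rightarrow> bool" where
  "density n \<rho> \<longleftrightarrow> hermitian n \<rho>
     \<and> (\<forall>v \<in> carrier_vec n. 0 \<le> Re (cinner n v (\<rho> *\<^sub>v v)))
     \<and> mtrace \<rho> = 1"

definition pure_decomp :: "nat \<Rightarrow> complex mat \<Rightarrow> nat \<Rightarrow> (nat \<Rightarrow> real) \<Rightarrow> (nat \<Rightarrow> complex vec) \<Rightarrow> bool" where
  "pure_decomp n \<rho> m p \<psi> \<longleftrightarrow> 0 < m
     \<and> (\<forall>k<m. 0 < p k \<and> \<psi> k \<in> carrier_vec n \<and> cinner n (\<psi> k) (\<psi> k) = 1)
     \<and> \<rho> = mat n n (\<lambda>(i,j). \<Sum>k<m. complex_of_real (p k) * (\<psi> k $ i) * cnj (\<psi> k $ j))"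

definition superpos :: "nat \<Rightarrow> complex vec \<Rightarrow> nat" where
  "superpos d \<psi> = card {i. i < d \<and> \<psi> $ i \<noteq> 0}"

definition N_S :: "nat \<Rightarrow> complex mat \<Rightarrow> nat" where
  "N_S d \<rho> = Inf {Max ((\<lambda>k. superpos d (\<psi> k)) ` {..<m}) | m p \<psi>. pure_decomp d \<rho> m p \<psi>}"

definition tensor_vec :: "nat \<Rightarrow> complex vec \<Rightarrow> complex vec \<Rightarrow> complex vec" where
  "tensor_vec d u v = vec (d*d) (\<lambda>k. u $ (k div d) * v $ (k mod d))"

definition schmidt_rank :: "nat \<Rightarrow> complex vec \<Rightarrow> nat" where
  "schmidt_rank d \<Psi> = (LEAST r. \<exists>s u v.
      (\<forall>k<r. 0 < s k \<and> u k \<in> carrier_vec d \<and> v k \<in> carrier_vec d)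
      \<and> (\<forall>k<r. \<forall>l<r. cinner d (u k) (u l) = (if k = l then 1 else 0)
                    \<and> cinner d (v k) (v l) = (if k = l then 1 else 0))
      \<and> \<Psi> = vec (d*d) (\<lambda>i. \<Sum>k<r. complex_of_real (s k) * tensor_vec d (u k) (v k) $ i))"

definition S_N :: "nat \<Rightarrow> complex mat \<Rightarrow> nat" where
  "S_N d \<rho> = Inf {Max ((\<lambda>k. schmidt_rank d (\<psi> k)) ` {..<m}) | m p \<psi>. pure_decomp (d*d) \<rho> m p \<psi>}"

definition kron :: "nat \<Rightarrow> complex mat \<Rightarrow> complex mat \<Rightarrow> complex mat" where
  "kron d A B = mat (d*d) (d*d) (\<lambda>(r,c). A $$ (r div d, c div d) * B $$ (r mod d, c mod d))"

definition proj0 :: "nat \<Rightarrow> complex mat" where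
  "proj0 d = mat d d (\<lambda>(i,j). if i = 0 \<and> j = 0 then 1 else 0)"

text \<open>U_CD |i,j> = |i, j +_d i>.\<close>
definition U_CD :: "nat \<Rightarrow> complex mat" where
  "U_CD d = mat (d*d) (d*d) (\<lambda>(r,c). if r = (c div d) * d + ((c mod d + c div d) mod d) then 1 else 0)"

definition cd_output :: "nat \<Rightarrow> complex mat \<Rightarrow> complex mat" where
  "cd_output d \<rho> = U_CD d * kron d \<rho> (proj0 d) * adj (U_CD d)"

end

theory Submission
  imports Defs
begin


definition psdf :: "nat \<Rightarrow> (nat \<Rightarrow> nat \<Rightarrow> complex) \<Rightarrow> bool" where
  "psdf d f \<longleftrightarrow> (\<forall>i<d. \<forall>j<d. f i j = cnj (f j i))
     \<and> (\<forall>v. 0 \<le> Re (\<Sum>i<d. cnj (v i) * (\<Sum>j<d. f i j * v j)))"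

lemma real_quad_aux:
  fixes q B s :: real
  assumes "\<And>r. 0 \<le> q - 2*r*B + r^2*B*s" "0 \<le> B" "0 \<le> s"
  shows "B \<le> s * q"
proof (cases "s > 0")
  case True
  have "0 \<le> q - 2*(1/s)*B + (1/s)^2*B*s" by (rule assms(1))
  also have "\<dots> = q - B/s" using True by (simp add: power2_eq_square field_simps)
  finally have "B/s \<le> q" by simp
  thus ?thesis using True by (simp add: field_simps mult.commute)
next
  case False
  hence s0: "s = 0" using assms by simp
  show ?thesis
  proof (rule ccontr)
    assume "\<not> ?thesis"
    hence Bp: "B > 0" using s0 by simp
    have "0 \<le> q - 2*((q+1)/(2*B))*B + ((q+1)/(2*B))^2*B*s" by (rule assms(1))
    also have "\<dots> = -1" using Bp s0 by (simp add: field_simps)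
    finally show False by simp
  qed
qed

lemma quad_expand:
  fixes f :: "nat \<Rightarrow> nat \<Rightarrow> complex"
  assumes a: "a < d" and herm: "\<forall>i<d. \<forall>j<d. f i j = cnj (f j i)"
  shows "(\<Sum>i<d. cnj (v i + (if i = a then t else 0)) * (\<Sum>j<d. f i j * (v j + (if j = a then t else 0))))
    = (\<Sum>i<d. cnj (v i) * (\<Sum>j<d. f i j * v j)) + t * cnj (\<Sum>j<d. f a j * v j)
      + cnj t * (\<Sum>j<d. f a j * v j) + cnj t * t * f a a"
proof -
  have inner: "(\<Sum>j<d. f i j * (v j + (if j = a then t else 0))) = (\<Sum>j<d. f i j * v j) + f i a * t" for i
  proof -
    have "(\<Sum>j<d. f i j * (v j + (if j = a then t else 0))) = (\<Sum>j<d. f i j * v j + (if j = a then f i j * t else 0))"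
      by (rule sum.cong) (auto simp: distrib_left)
    also have "\<dots> = (\<Sum>j<d. f i j * v j) + f i a * t"
      using a by (simp add: sum.distrib)
    finally show ?thesis .
  qed
  have c: "(\<Sum>i<d. cnj (v i) * f i a) = cnj (\<Sum>j<d. f a j * v j)"
    unfolding cnj_sum
  proof (rule sum.cong)
    fix x assume "x \<in> {..<d}"
    hence "f a x = cnj (f x a)" using herm a by blast
    thus "cnj (v x) * f x a = cnj (f a x * v x)" by simp
  qed simp
  have "(\<Sum>i<d. cnj (v i + (if i = a then t else 0)) * (\<Sum>j<d. f i j * (v j + (if j = a then t else 0))))
     = (\<Sum>i<d. cnj (v i) * ((\<Sum>j<d. f i j * v j) + f i a * t)
          + (if i = a then cnj t * ((\<Sum>j<d. f i j * v j) + f i a * t) else 0))"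
    by (rule sum.cong) (auto simp: inner distrib_right)
  also have "\<dots> = (\<Sum>i<d. cnj (v i) * (\<Sum>j<d. f i j * v j)) + t * (\<Sum>i<d. cnj (v i) * f i a)
     + cnj t * ((\<Sum>j<d. f a j * v j) + f a a * t)"
    using a by (simp add: sum.distrib sum_distrib_left distrib_left mult.assoc mult.left_commute mult.commute)
  finally show ?thesis unfolding c by (simp add: algebra_simps)
qed

lemma psdfD: assumes "psdf d f" shows "0 \<le> Re (\<Sum>i<d. cnj (v i) * (\<Sum>j<d. f i j * v j))"
  "\<And>i j. i < d \<Longrightarrow> j < d \<Longrightarrow> f i j = cnj (f j i)"
  using assms unfolding psdf_def by blast+

lemma psd_diag:
  assumes "psdf d f" "a < d"
  shows "f a a = complex_of_real (Re (f a a))" "0 \<le> Re (f a a)"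
proof -
  have h: "\<forall>i<d. \<forall>j<d. f i j = cnj (f j i)" using assms(1) unfolding psdf_def by blast
  have "f a a = cnj (f a a)" using h assms(2) by blast
  thus "f a a = complex_of_real (Re (f a a))" by (metis Reals_cnj_iff complex_is_Real_iff of_real_Re)
  have "0 \<le> Re (\<Sum>i<d. cnj ((\<lambda>_. 0) i + (if i = a then 1 else 0)) * (\<Sum>j<d. f i j * ((\<lambda>_. 0) j + (if j = a then 1 else 0))))"
    by (rule psdfD(1)[OF assms(1)])
  also have "\<dots> = Re (f a a)" unfolding quad_expand[OF assms(2) h] by simp
  finally show "0 \<le> Re (f a a)" .
qed

lemma psd_cs:
  assumes psd: "psdf d f" and a: "a < d"
  shows "(cmod (\<Sum>j<d. f a j * v j))^2 \<le> Re (f a a) * Re (\<Sum>i<d. cnj (v i) * (\<Sum>j<d. f i j * v j))"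
proof -
  have h: "\<forall>i<d. \<forall>j<d. f i j = cnj (f j i)" using psd unfolding psdf_def by blast
  define b where "b = (\<Sum>j<d. f a j * v j)"
  define q where "q = Re (\<Sum>i<d. cnj (v i) * (\<Sum>j<d. f i j * v j))"
  define s where "s = Re (f a a)"
  define B where "B = (cmod b)^2"
  have faa: "f a a = complex_of_real s" using psd_diag[OF psd a] s_def by simp
  have bb: "b * cnj b = complex_of_real B" unfolding B_def by (metis complex_norm_square)
  have "0 \<le> q - 2*r*B + r^2*B*s" for r
  proof -
    define t where "t = - (complex_of_real r * b)"
    have "0 \<le> Re (\<Sum>i<d. cnj (v i + (if i = a then t else 0)) * (\<Sum>j<d. f i j * (v j + (if j = a then t else 0))))"
      by (rule psdfD(1)[OF psd])
    also have "\<dots> = q + Re (t * cnj b + cnj t * b + cnj t * t * f a a)"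
      unfolding quad_expand[OF a h] q_def b_def by simp
    also have "t * cnj b + cnj t * b + cnj t * t * f a a = complex_of_real (- 2*r*B + r^2*B*s)"
      unfolding t_def faa
      by (simp add: algebra_simps power2_eq_square bb[symmetric])
    finally show ?thesis by simp
  qed
  moreover have "0 \<le> s" using psd_diag[OF psd a] s_def by simp
  ultimately have "B \<le> s * q" using real_quad_aux[of q B s] B_def by simp
  thus ?thesis unfolding B_def b_def s_def q_def .
qed

lemma delta_r: "(\<Sum>j<(d::nat). (g j :: complex) * (if j = b then 1 else 0)) = (if b < d then g b else 0)"
  by (subst sum.cong[OF refl, of _ _ "\<lambda>j. if j = b then g j else 0"]) auto
lemma delta_l: "(\<Sum>j<(d::nat). cnj (if j = b then 1 else 0) * (g j :: complex)) = (if b < d then g b else 0)"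
  by (subst sum.cong[OF refl, of _ _ "\<lambda>j. if j = b then g j else 0"]) auto

lemma psd_entry:
  assumes psd: "psdf d f" and a: "a < d" and b: "b < d"
  shows "(cmod (f a b))^2 \<le> Re (f a a) * Re (f b b)"
proof -
  have "(cmod (\<Sum>j<d. f a j * (if j = b then 1 else 0)))^2 \<le> Re (f a a) *
     Re (\<Sum>i<d. cnj (if i = b then 1 else 0) * (\<Sum>j<d. f i j * (if j = b then 1 else 0)))"
    by (rule psd_cs[OF psd a])
  moreover have "(\<Sum>j<d. f a j * (if j = b then 1 else 0)) = f a b" using b
    by (subst sum.cong[OF refl, of _ _ "\<lambda>j. if j = b then f a j else 0"]) auto
  moreover have "(\<Sum>i<d. cnj (if i = b then 1 else 0) * (\<Sum>j<d. f i j * (if j = b then 1 else 0))) = f b b"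
    using b by (simp add: delta_r delta_l)
  ultimately show ?thesis by simp
qed

lemma psd_offdiag:
  assumes psd: "psdf d f" and a: "a < d" and b: "b < d" and z: "Re (f b b) = 0"
  shows "f a b = 0" "f b a = 0"
proof -
  have "(cmod (f a b))^2 \<le> 0" using psd_entry[OF psd a b] z by simp
  thus "f a b = 0" by simp
  thus "f b a = 0" using psdfD(2)[OF psd b a] by simp
qed

lemma peel:
  assumes psd: "psdf d f" and a: "a < d" and sp: "0 < Re (f a a)"
  defines "s \<equiv> Re (f a a)"
  assumes w_def: "w = (\<lambda>i. f i a / complex_of_real (sqrt s))"
  assumes g_def: "g = (\<lambda>i j. f i j - w i * cnj (w j))"
  shows "psdf d g" "g a a = 0" "\<And>b. b < d \<Longrightarrow> f b b = 0 \<Longrightarrow> g b b = 0" "w a \<noteq> 0"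
proof -
  have s: "s > 0" using sp s_def by simp
  have faa: "f a a = complex_of_real s" using psd_diag[OF psd a] s_def by simp
  have sq: "complex_of_real (sqrt s) * complex_of_real (sqrt s) = complex_of_real s"
    using s by (subst of_real_mult[symmetric]) simp
  have cw: "cnj (w j) = f a j / complex_of_real (sqrt s)" if "j < d" for j
    unfolding w_def using psdfD(2)[OF psd a that] by simp
  have herm: "g i j = cnj (g j i)" if "i < d" "j < d" for i j
    unfolding g_def using psdfD(2)[OF psd that] by simp
  have quad: "0 \<le> Re (\<Sum>i<d. cnj (v i) * (\<Sum>j<d. g i j * v j))" for v
  proof -
    define b where "b = (\<Sum>j<d. f a j * v j)"
    define q where "q = Re (\<Sum>i<d. cnj (v i) * (\<Sum>j<d. f i j * v j))"
    define c where "c = (\<Sum>j<d. cnj (w j) * v j)"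
    have c2: "c = b / complex_of_real (sqrt s)"
      unfolding c_def b_def sum_divide_distrib by (rule sum.cong) (auto simp: cw)
    have cc: "cnj c = (\<Sum>i<d. cnj (v i) * w i)" unfolding c_def cnj_sum by (simp add: mult.commute)
    have "(\<Sum>i<d. cnj (v i) * (\<Sum>j<d. g i j * v j))
        = (\<Sum>i<d. cnj (v i) * (\<Sum>j<d. f i j * v j) - cnj (v i) * w i * c)"
      unfolding g_def c_def
      by (rule sum.cong) (simp_all add: left_diff_distrib right_diff_distrib sum_subtractf sum_distrib_left mult.assoc)
    also have "\<dots> = (\<Sum>i<d. cnj (v i) * (\<Sum>j<d. f i j * v j)) - cnj c * c"
      unfolding cc sum_subtractf sum_distrib_right ..
    finally have e: "Re (\<Sum>i<d. cnj (v i) * (\<Sum>j<d. g i j * v j)) = q - (cmod b)^2 / s"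
      unfolding q_def c2 using s
      by (simp add: complex_norm_square[symmetric] power_divide) (metis cmod_power2 power2_eq_square)
    have "(cmod b)^2 \<le> s * q" using psd_cs[OF psd a, of v] unfolding b_def q_def s_def .
    hence "(cmod b)^2 / s \<le> q" using s by (simp add: divide_le_eq mult.commute)
    thus ?thesis unfolding e by simp
  qed
  show "psdf d g" unfolding psdf_def using herm quad by blast
  show "g a a = 0" unfolding g_def using cw[OF a] faa s unfolding w_def
    by (simp add: field_simps sq)
  show "g b b = 0" if "b < d" "f b b = 0" for b
  proof -
    have "f b a = 0" using psd_offdiag(2)[OF psd a that(1)] that by simp
    thus ?thesis unfolding g_def w_def using that by simp
  qed
  show "w a \<noteq> 0" unfolding w_def faa using s by simp
qed

lemma psd_decomp_aux:
  "card {i. i < d \<and> f i i \<noteq> 0} = n \<Longrightarrow> psdf d f \<Longrightarrow>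
   \<exists>(m::nat) w. (\<forall>k<m. \<exists>i<d. w k i \<noteq> 0) \<and> (\<forall>i<d. \<forall>j<d. f i j = (\<Sum>k<m. w k i * cnj (w k j)))"
proof (induction n arbitrary: f rule: less_induct)
  case (less n f)
  note psd = less.prems(2)
  show ?case
  proof (cases "\<exists>a<d. f a a \<noteq> 0")
    case False
    have z: "f i j = 0" if "i < d" "j < d" for i j
      using psd_offdiag(1)[OF psd that] False that by simp
    show ?thesis by (rule exI[of _ "0::nat"], rule exI[of _ "\<lambda>_ _. 0::complex"]) (simp add: z)
  next
    case True
    then obtain a where a: "a < d" "f a a \<noteq> 0" by blast
    have faa: "f a a = complex_of_real (Re (f a a))" "0 \<le> Re (f a a)" using psd_diag[OF psd a(1)] by auto
    have "Re (f a a) \<noteq> 0"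
    proof
      assume h: "Re (f a a) = 0"
      have "f a a = complex_of_real (Re (f a a))" by (rule faa(1))
      also have "\<dots> = 0" unfolding h by simp
      finally show False using a(2) by simp
    qed
    hence sp: "0 < Re (f a a)" using faa(2) by linarith
    define s where "s = Re (f a a)"
    define w where "w = (\<lambda>i. f i a / complex_of_real (sqrt s))"
    define g where "g = (\<lambda>i j. f i j - w i * cnj (w j))"
    note P = peel[OF psd a(1) sp, folded s_def, OF w_def g_def]
    have sub: "{i. i < d \<and> g i i \<noteq> 0} \<subset> {i. i < d \<and> f i i \<noteq> 0}"
    proof (rule psubsetI)
      show "{i. i < d \<and> g i i \<noteq> 0} \<subseteq> {i. i < d \<and> f i i \<noteq> 0}" using P(3) by blast
      have "a \<notin> {i. i < d \<and> g i i \<noteq> 0}" using P(2) by blast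
      moreover have "a \<in> {i. i < d \<and> f i i \<noteq> 0}" using a by blast
      ultimately show "{i. i < d \<and> g i i \<noteq> 0} \<noteq> {i. i < d \<and> f i i \<noteq> 0}" by blast
    qed
    have "card {i. i < d \<and> g i i \<noteq> 0} < n"
      using psubset_card_mono[OF _ sub] less.prems(1) by auto
    from less.IH[OF this refl P(1)] obtain m :: nat and u where
      u: "\<forall>k<m. \<exists>i<d. u k i \<noteq> 0" "\<forall>i<d. \<forall>j<d. g i j = (\<Sum>k<m. u k i * cnj (u k j))" by blast
    define u' where "u' = (\<lambda>k. if k < m then u k else w)"
    have A: "\<exists>i<d. u' k i \<noteq> 0" if "k < Suc m" for k
    proof (cases "k < m")
      case True thus ?thesis using u(1) unfolding u'_def by simp
    next
      case False thus ?thesis using P(4) a(1) unfolding u'_def by auto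
    qed
    have B: "f i j = (\<Sum>k<Suc m. u' k i * cnj (u' k j))" if ij: "i < d" "j < d" for i j
    proof -
      have "(\<Sum>k<Suc m. u' k i * cnj (u' k j)) = (\<Sum>k<m. u k i * cnj (u k j)) + w i * cnj (w j)"
        unfolding u'_def by simp
      also have "\<dots> = g i j + w i * cnj (w j)" using u(2) ij by simp
      also have "\<dots> = f i j" unfolding g_def by simp
      finally show ?thesis by simp
    qed
    show ?thesis using A B by blast
  qed
qed

lemma psd_decomp:
  "psdf d f \<Longrightarrow>
   \<exists>(m::nat) w. (\<forall>k<m. \<exists>i<d. w k i \<noteq> 0) \<and> (\<forall>i<d. \<forall>j<d. f i j = (\<Sum>k<m. w k i * cnj (w k j)))"
  using psd_decomp_aux by blast

lemma density_carrier: "density d \<rho> \<Longrightarrow> \<rho> \<in> carrier_mat d d"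
  unfolding density_def hermitian_def by blast

lemma density_d_pos: "density d \<rho> \<Longrightarrow> 0 < d"
proof (rule ccontr)
  assume a: "density d \<rho>" "\<not> 0 < d"
  hence "dim_row \<rho> = 0" using density_carrier[OF a(1)] by auto
  hence "mtrace \<rho> = 0" unfolding mtrace_def by simp
  thus False using a(1) unfolding density_def by simp
qed

lemma density_psdf:
  assumes den: "density d \<rho>"
  shows "psdf d (\<lambda>i j. \<rho> $$ (i,j))"
proof -
  have C: "\<rho> \<in> carrier_mat d d" by (rule density_carrier[OF den])
  have adj: "adj \<rho> = \<rho>" using den unfolding density_def hermitian_def by blast
  have herm: "\<rho> $$ (i,j) = cnj (\<rho> $$ (j,i))" if "i < d" "j < d" for i j
  proof -
    have "adj \<rho> $$ (i,j) = cnj (\<rho> $$ (j,i))" unfolding adj_def using that C by auto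
    thus ?thesis using adj by simp
  qed
  have quad: "0 \<le> Re (\<Sum>i<d. cnj (v i) * (\<Sum>j<d. \<rho> $$ (i,j) * v j))" for v
  proof -
    define vv where "vv = vec d v"
    have vv: "vv \<in> carrier_vec d" unfolding vv_def by simp
    have "0 \<le> Re (cinner d vv (\<rho> *\<^sub>v vv))" using den vv unfolding density_def by blast
    also have "cinner d vv (\<rho> *\<^sub>v vv) = (\<Sum>i<d. cnj (v i) * (\<Sum>j<d. \<rho> $$ (i,j) * v j))"
      unfolding cinner_def
    proof (rule sum.cong)
      fix i assume i: "i \<in> {..<d}"
      have "(\<rho> *\<^sub>v vv) $ i = (\<Sum>j<d. \<rho> $$ (i,j) * v j)"
        using i C unfolding vv_def by (auto simp: scalar_prod_def atLeast0LessThan intro!: sum.cong)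
      thus "cnj (vv $ i) * (\<rho> *\<^sub>v vv) $ i = cnj (v i) * (\<Sum>j<d. \<rho> $$ (i,j) * v j)"
        using i unfolding vv_def by simp
    qed simp
    finally show ?thesis .
  qed
  show ?thesis unfolding psdf_def using herm quad by blast
qed

lemma density_decomp:
  assumes den: "density d \<rho>"
  shows "\<exists>m p \<psi>. pure_decomp d \<rho> m p \<psi>"
proof -
  have C: "\<rho> \<in> carrier_mat d d" by (rule density_carrier[OF den])
  obtain m :: nat and w where w: "\<forall>k<m. \<exists>i<d. w k i \<noteq> 0"
    "\<forall>i<d. \<forall>j<d. \<rho> $$ (i,j) = (\<Sum>k<m. w k i * cnj (w k j))"
    using psd_decomp[OF density_psdf[OF den]] by blast
  have m: "0 < m"
  proof (rule ccontr)
    assume "\<not> 0 < m"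
    hence "\<rho> $$ (i,i) = 0" if "i < d" for i using w(2) that by simp
    hence "mtrace \<rho> = 0" unfolding mtrace_def using C by simp
    thus False using den unfolding density_def by simp
  qed
  define p where "p = (\<lambda>k. \<Sum>i<d. (cmod (w k i))^2)"
  have pp: "0 < p k" if k: "k < m" for k
  proof -
    obtain i where i: "i < d" "w k i \<noteq> 0" using w(1) k by blast
    have "(cmod (w k i))^2 \<le> p k" unfolding p_def
      by (rule member_le_sum[of i "{..<d}" "\<lambda>i. (cmod (w k i))^2"]) (use i in auto)
    moreover have "0 < (cmod (w k i))^2" using i by simp
    ultimately show ?thesis by linarith
  qed
  have pc: "(\<Sum>i<d. cnj (w k i) * w k i) = complex_of_real (p k)" for k
    unfolding p_def of_real_sum by (rule sum.cong) (simp_all only: complex_norm_square mult.commute)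
  define \<psi> where "\<psi> = (\<lambda>k. vec d (\<lambda>i. w k i / complex_of_real (sqrt (p k))))"
  have sq: "complex_of_real (sqrt (p k)) * complex_of_real (sqrt (p k)) = complex_of_real (p k)" if "k < m" for k
    using pp[OF that] by (subst of_real_mult[symmetric]) simp
  have norm: "cinner d (\<psi> k) (\<psi> k) = 1" if k: "k < m" for k
  proof -
    have "cinner d (\<psi> k) (\<psi> k) = (\<Sum>i<d. cnj (w k i) * w k i) / complex_of_real (p k)"
      unfolding cinner_def \<psi>_def sum_divide_distrib
      by (rule sum.cong) (auto simp: sq[OF k, symmetric])
    also have "\<dots> = 1" unfolding pc using pp[OF k] by simp
    finally show ?thesis .
  qed
  have mat: "\<rho> = mat d d (\<lambda>(i,j). \<Sum>k<m. complex_of_real (p k) * (\<psi> k $ i) * cnj (\<psi> k $ j))"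
  proof (rule eq_matI)
    fix i j assume ij: "i < dim_row (mat d d (\<lambda>(i,j). \<Sum>k<m. complex_of_real (p k) * (\<psi> k $ i) * cnj (\<psi> k $ j)))"
      "j < dim_col (mat d d (\<lambda>(i,j). \<Sum>k<m. complex_of_real (p k) * (\<psi> k $ i) * cnj (\<psi> k $ j)))"
    hence ij': "i < d" "j < d" by auto
    have "\<rho> $$ (i,j) = (\<Sum>k<m. w k i * cnj (w k j))" using w(2) ij' by blast
    also have "\<dots> = (\<Sum>k<m. complex_of_real (p k) * (\<psi> k $ i) * cnj (\<psi> k $ j))"
    proof (rule sum.cong)
      fix k assume k: "k \<in> {..<m}"
      have "0 < p k" using pp k by simp
      hence pk: "complex_of_real (p k) \<noteq> 0" by simp
      show "w k i * cnj (w k j) = complex_of_real (p k) * (\<psi> k $ i) * cnj (\<psi> k $ j)"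
        unfolding \<psi>_def using ij' pk sq[of k] k by (simp add: field_simps)
    qed simp
    finally show "\<rho> $$ (i,j) = mat d d (\<lambda>(i,j). \<Sum>k<m. complex_of_real (p k) * (\<psi> k $ i) * cnj (\<psi> k $ j)) $$ (i,j)"
      using ij' by simp
  qed (use C in auto)
  have "pure_decomp d \<rho> m p \<psi>"
    unfolding pure_decomp_def using m pp norm mat unfolding \<psi>_def by auto
  thus ?thesis by blast
qed


lemma sum_sq: "(\<Sum>x<n*d. f x) = (\<Sum>a<n. \<Sum>b<(d::nat). f (a*d+b))"
proof -
  have "(\<Sum>x<n*d. f x) = (\<Sum>a<n. \<Sum>x\<in>{a*d..<a*d+d}. f x)" by (rule sum.nat_group[symmetric])
  also have "\<dots> = (\<Sum>a<n. \<Sum>b<d. f (a*d+b))"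
  proof (rule sum.cong[OF refl])
    fix a
    have "(\<Sum>x\<in>{0+a*d..<d+a*d}. f x) = (\<Sum>b\<in>{0..<d}. f (b+a*d))" by (rule sum.shift_bounds_nat_ivl)
    thus "(\<Sum>x\<in>{a*d..<a*d+d}. f x) = (\<Sum>b<d. f (a*d+b))" by (simp add: atLeast0LessThan add.commute)
  qed
  finally show ?thesis .
qed

lemma divmod_idx: "b < (d::nat) \<Longrightarrow> (a*d+b) div d = a" "b < (d::nat) \<Longrightarrow> (a*d+b) mod d = b"
  by auto

lemma idx_lt: "a < (d::nat) \<Longrightarrow> b < d \<Longrightarrow> a*d+b < d*d"
proof -
  assume "a < d" "b < d"
  hence "a*d + b < a*d + d" by simp
  also have "\<dots> = (a+1)*d" by simp
  also have "\<dots> \<le> d*d" using \<open>a<d\<close> by (intro mult_right_mono) auto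
  finally show ?thesis .
qed

lemma div_lt: "c < d*d \<Longrightarrow> c div d < (d::nat)"
  by (simp add: less_mult_imp_div_less)

lemma diag_iff: "a < (d::nat) \<Longrightarrow> (c = a*d+a) \<longleftrightarrow> (a = c div d \<and> c div d = c mod d)"
proof
  assume a: "a < d" "c = a*d+a"
  thus "a = c div d \<and> c div d = c mod d" using divmod_idx[of a d a] by simp
next
  assume "a = c div d \<and> c div d = c mod d"
  thus "c = a*d+a" by (metis div_mult_mod_eq)
qed

lemma diag_sum:
  assumes "c < d*(d::nat)"
  shows "(\<Sum>a<d. if c = a*d+a then X a else (0::complex)) = (if c div d = c mod d then X (c div d) else 0)"
proof -
  have "(\<Sum>a<d. if c = a*d+a then X a else (0::complex))
     = (\<Sum>a<d. if a = c div d then (if c div d = c mod d then X (c div d) else 0) else 0)"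
    by (rule sum.cong) (auto simp: diag_iff)
  also have "\<dots> = (if c div d = c mod d then X (c div d) else 0)"
    using div_lt[OF assms] by simp
  finally show ?thesis .
qed

lemma mult_entry:
  assumes "A \<in> carrier_mat n k" "B \<in> carrier_mat k l" "i < n" "j < l"
  shows "(A * B) $$ (i,j) = (\<Sum>x<k. A $$ (i,x) * B $$ (x,j))"
  using assms by (auto simp: scalar_prod_def atLeast0LessThan intro!: sum.cong)

lemma U_carrier: "U_CD d \<in> carrier_mat (d*d) (d*d)" unfolding U_CD_def by simp
lemma adjU_carrier: "adj (U_CD d) \<in> carrier_mat (d*d) (d*d)" unfolding U_CD_def adj_def by simp
lemma kron_carrier: "kron d A B \<in> carrier_mat (d*d) (d*d)" unfolding kron_def by simp

lemma U_idx: "a < d \<Longrightarrow> b < d \<Longrightarrow> r < d*d \<Longrightarrow>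
  U_CD d $$ (r, a*d+b) = (if r = a*d + (b+a) mod d then 1 else 0)"
  unfolding U_CD_def using idx_lt[of a d b] divmod_idx[of b d a] by simp

lemma adjU_idx: "a < d \<Longrightarrow> b < d \<Longrightarrow> c < d*d \<Longrightarrow>
  adj (U_CD d) $$ (a*d+b, c) = (if c = a*d + (b+a) mod d then 1 else 0)"
  unfolding adj_def U_CD_def using idx_lt[of a d b] divmod_idx[of b d a] by simp

lemma K_idx: "a < d \<Longrightarrow> b < d \<Longrightarrow> t < d*d \<Longrightarrow>
  kron d \<rho> (proj0 d) $$ (a*d+b, t) = (if b = 0 \<and> t mod d = 0 then \<rho> $$ (a, t div d) else 0)"
  unfolding kron_def proj0_def using idx_lt[of a d b] divmod_idx[of b d a] by simp

lemma UK_idx: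
  assumes d: "0 < d" and r: "r < d*d" and t: "t < d*d"
  shows "(U_CD d * kron d \<rho> (proj0 d)) $$ (r,t) =
    (if r div d = r mod d \<and> t mod d = 0 then \<rho> $$ (r div d, t div d) else 0)"
proof -
  have "(U_CD d * kron d \<rho> (proj0 d)) $$ (r,t) = (\<Sum>x<d*d. U_CD d $$ (r,x) * kron d \<rho> (proj0 d) $$ (x,t))"
    by (rule mult_entry[OF U_carrier kron_carrier r t])
  also have "\<dots> = (\<Sum>a<d. \<Sum>b<d. U_CD d $$ (r,a*d+b) * kron d \<rho> (proj0 d) $$ (a*d+b,t))"
    by (rule sum_sq)
  also have "\<dots> = (\<Sum>a<d. \<Sum>b<d. if b = 0 then (if r = a*d+a then (if t mod d = 0 then \<rho> $$ (a, t div d) else 0) else 0) else 0)"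
    by (intro sum.cong refl) (auto simp: U_idx K_idx r t)
  also have "\<dots> = (\<Sum>a<d. if r = a*d+a then (if t mod d = 0 then \<rho> $$ (a, t div d) else 0) else 0)"
    using d by simp
  also have "\<dots> = (if r div d = r mod d \<and> t mod d = 0 then \<rho> $$ (r div d, t div d) else 0)"
    unfolding diag_sum[OF r] by simp
  finally show ?thesis .
qed

lemma out_idx:
  assumes d: "0 < d" and r: "r < d*d" and c: "c < d*d"
  shows "cd_output d \<rho> $$ (r,c) =
    (if r div d = r mod d \<and> c div d = c mod d then \<rho> $$ (r div d, c div d) else 0)"
proof -
  have "cd_output d \<rho> $$ (r,c) = (\<Sum>x<d*d. (U_CD d * kron d \<rho> (proj0 d)) $$ (r,x) * adj (U_CD d) $$ (x,c))"
    unfolding cd_output_def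
    by (rule mult_entry[OF mult_carrier_mat[OF U_carrier kron_carrier] adjU_carrier r c])
  also have "\<dots> = (\<Sum>a<d. \<Sum>b<d. (U_CD d * kron d \<rho> (proj0 d)) $$ (r,a*d+b) * adj (U_CD d) $$ (a*d+b,c))"
    by (rule sum_sq)
  also have "\<dots> = (\<Sum>a<d. \<Sum>b<d. if b = 0 then (if c = a*d+a then (if r div d = r mod d then \<rho> $$ (r div d, a) else 0) else 0) else 0)"
    by (intro sum.cong refl) (auto simp: UK_idx adjU_idx d r c idx_lt divmod_idx)
  also have "\<dots> = (\<Sum>a<d. if c = a*d+a then (if r div d = r mod d then \<rho> $$ (r div d, a) else 0) else 0)"
    using d by simp
  also have "\<dots> = (if r div d = r mod d \<and> c div d = c mod d then \<rho> $$ (r div d, c div d) else 0)"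
    unfolding diag_sum[OF c] by simp
  finally show ?thesis .
qed

lemma out_carrier: "cd_output d \<rho> \<in> carrier_mat (d*d) (d*d)"
  unfolding cd_output_def using U_carrier kron_carrier adjU_carrier by (metis mult_carrier_mat)
definition diagvec :: "nat \<Rightarrow> complex vec \<Rightarrow> complex vec" where
  "diagvec d \<psi> = vec (d*d) (\<lambda>x. if x div d = x mod d then \<psi> $ (x div d) else 0)"

lemma diagvec_carrier: "diagvec d \<psi> \<in> carrier_vec (d*d)" unfolding diagvec_def by simp

lemma diagvec_idx: "a < d \<Longrightarrow> b < d \<Longrightarrow> diagvec d \<psi> $ (a*d+b) = (if a = b then \<psi> $ a else 0)"
  unfolding diagvec_def using idx_lt[of a d b] divmod_idx[of b d a] by simp

lemma cinner_diagvec: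
  assumes d: "0 < d"
  shows "cinner (d*d) (diagvec d \<psi>) (diagvec d \<phi>) = cinner d \<psi> \<phi>"
proof -
  have "cinner (d*d) (diagvec d \<psi>) (diagvec d \<phi>)
     = (\<Sum>a<d. \<Sum>b<d. cnj (diagvec d \<psi> $ (a*d+b)) * diagvec d \<phi> $ (a*d+b))"
    unfolding cinner_def by (rule sum_sq)
  also have "\<dots> = (\<Sum>a<d. \<Sum>b<d. if b = a then cnj (\<psi> $ a) * \<phi> $ a else 0)"
    by (intro sum.cong refl) (auto simp: diagvec_idx)
  also have "\<dots> = cinner d \<psi> \<phi>" unfolding cinner_def by simp
  finally show ?thesis .
qed

lemma sgn_cnj_sgn: "(z::complex) \<noteq> 0 \<Longrightarrow> cnj (sgn z) * sgn z = 1"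
proof -
  assume z: "z \<noteq> 0"
  have "cnj (sgn z) * sgn z = complex_of_real ((cmod (sgn z))^2)" by (metis complex_norm_square mult.commute)
  also have "\<dots> = 1" using z by (simp add: norm_sgn)
  finally show ?thesis .
qed

lemma cmod_sgn: "complex_of_real (cmod z) * sgn z = z"
  by (cases "z = 0") (simp_all add: sgn_div_norm scaleR_conv_of_real)

definition schmidt_pred :: "nat \<Rightarrow> complex vec \<Rightarrow> nat \<Rightarrow> bool" where
  "schmidt_pred d \<Psi> r \<longleftrightarrow> (\<exists>s u v.
      (\<forall>k<r. 0 < s k \<and> u k \<in> carrier_vec d \<and> v k \<in> carrier_vec d)
      \<and> (\<forall>k<r. \<forall>l<r. cinner d (u k) (u l) = (if k = l then 1 else 0)
                    \<and> cinner d (v k) (v l) = (if k = l then 1 else 0))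
      \<and> \<Psi> = vec (d*d) (\<lambda>i. \<Sum>k<r. complex_of_real (s k) * tensor_vec d (u k) (v k) $ i))"

lemma schmidt_rank_pred: "schmidt_rank d \<Psi> = (LEAST r. schmidt_pred d \<Psi> r)"
  unfolding schmidt_rank_def schmidt_pred_def ..

lemma schmidt_witness:
  assumes d: "0 < d"
  shows "schmidt_pred d (diagvec d \<psi>) (superpos d \<psi>)"
proof -
  define I where "I = {i. i < d \<and> \<psi> $ i \<noteq> 0}"
  define n where "n = card I"
  have fin: "finite I" unfolding I_def by simp
  obtain g where g: "bij_betw g {0..<n} I" using ex_bij_betw_nat_finite[OF fin] n_def by blast
  have gI: "g k \<in> I" if "k < n" for k using g that unfolding bij_betw_def by auto
  have gd: "g k < d" "\<psi> $ g k \<noteq> 0" if "k < n" for k using gI[OF that] unfolding I_def by auto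
  have ginj: "g k = g l \<longleftrightarrow> k = l" if "k < n" "l < n" for k l
    using g that unfolding bij_betw_def inj_on_def by auto
  define s where "s = (\<lambda>k. cmod (\<psi> $ g k))"
  define u where "u = (\<lambda>k. vec d (\<lambda>i. if i = g k then sgn (\<psi> $ g k) else 0))"
  define v where "v = (\<lambda>k. vec d (\<lambda>i. if i = g k then 1 else (0::complex)))"
  have A: "\<forall>k<n. 0 < s k \<and> u k \<in> carrier_vec d \<and> v k \<in> carrier_vec d"
    using gd unfolding s_def u_def v_def by auto
  have Bu: "cinner d (u k) (u l) = (if k = l then 1 else 0)" if kl: "k < n" "l < n" for k l
  proof -
    have "cinner d (u k) (u l) = (\<Sum>i<d. if i = g k then (if k = l then 1 else 0) else 0)"
      unfolding cinner_def
      by (rule sum.cong) (use gd[OF kl(1)] ginj[OF kl] sgn_cnj_sgn in \<open>auto simp: u_def\<close>)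
    thus ?thesis using gd[OF kl(1)] by simp
  qed
  have Bv: "cinner d (v k) (v l) = (if k = l then 1 else 0)" if kl: "k < n" "l < n" for k l
  proof -
    have "cinner d (v k) (v l) = (\<Sum>i<d. if i = g k then (if k = l then 1 else 0) else 0)"
      unfolding cinner_def
      by (rule sum.cong) (use gd[OF kl(1)] ginj[OF kl] in \<open>auto simp: v_def\<close>)
    thus ?thesis using gd[OF kl(1)] by simp
  qed
  have C: "diagvec d \<psi> = vec (d*d) (\<lambda>x. \<Sum>k<n. complex_of_real (s k) * tensor_vec d (u k) (v k) $ x)"
  proof (rule eq_vecI)
    fix x assume "x < dim_vec (vec (d*d) (\<lambda>x. \<Sum>k<n. complex_of_real (s k) * tensor_vec d (u k) (v k) $ x))"
    hence x: "x < d*d" by simp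
    define a where "a = x div d"
    define b where "b = x mod d"
    have ab: "a < d" "b < d" "x = a*d+b" using x d div_lt[OF x] unfolding a_def b_def by auto
    have "(\<Sum>k<n. complex_of_real (s k) * tensor_vec d (u k) (v k) $ x)
        = (\<Sum>k\<in>{0..<n}. (\<lambda>i. if a = i \<and> b = i then \<psi> $ i else 0) (g k))"
      unfolding atLeast0LessThan
    proof (rule sum.cong)
      fix k assume k: "k \<in> {..<n}"
      show "complex_of_real (s k) * tensor_vec d (u k) (v k) $ x = (\<lambda>i. if a = i \<and> b = i then \<psi> $ i else 0) (g k)"
        using ab x gd k unfolding tensor_vec_def s_def u_def v_def a_def b_def
        by (auto simp: cmod_sgn)
    qed simp
    also have "\<dots> = (\<Sum>i\<in>I. if a = i \<and> b = i then \<psi> $ i else 0)"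
      by (rule sum.reindex_bij_betw[OF g])
    also have "\<dots> = (if a = b then \<psi> $ a else 0)"
    proof (cases "a = b")
      case True
      have "(\<Sum>i\<in>I. if a = i \<and> b = i then \<psi> $ i else 0) = (\<Sum>i\<in>I. if a = i then \<psi> $ i else 0)"
        using True by (intro sum.cong) auto
      also have "\<dots> = \<psi> $ a" using fin ab unfolding I_def by auto
      finally show ?thesis using True by simp
    next
      case False thus ?thesis by (auto intro!: sum.neutral)
    qed
    also have "\<dots> = diagvec d \<psi> $ x" using diagvec_idx[OF ab(1,2)] ab(3) by simp
    finally show "diagvec d \<psi> $ x = vec (d*d) (\<lambda>x. \<Sum>k<n. complex_of_real (s k) * tensor_vec d (u k) (v k) $ x) $ x"
      using x by simp
  qed (simp add: diagvec_def)
  have "schmidt_pred d (diagvec d \<psi>) n"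
    unfolding schmidt_pred_def using A Bu Bv C by blast
  thus ?thesis unfolding n_def I_def superpos_def .
qed
lemma schmidt_lower:
  assumes d: "0 < d" and P: "schmidt_pred d (diagvec d \<psi>) r"
  shows "superpos d \<psi> \<le> r"
proof -
  obtain s u v where
    A: "\<forall>k<r. 0 < s k \<and> u k \<in> carrier_vec d \<and> v k \<in> carrier_vec d" and
    B: "\<forall>k<r. \<forall>l<r. cinner d (u k) (u l) = (if k = l then 1 else 0)
                    \<and> cinner d (v k) (v l) = (if k = l then 1 else 0)" and
    C: "diagvec d \<psi> = vec (d*d) (\<lambda>i. \<Sum>k<r. complex_of_real (s k) * tensor_vec d (u k) (v k) $ i)"
    using P unfolding schmidt_pred_def by blast
  have Cij: "(if i = j then \<psi> $ i else 0) = (\<Sum>k<r. complex_of_real (s k) * u k $ i * v k $ j)"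
    if ij: "i < d" "j < d" for i j
  proof -
    have "(if i = j then \<psi> $ i else 0) = diagvec d \<psi> $ (i*d+j)" using diagvec_idx[OF ij] by simp
    also have "\<dots> = (\<Sum>k<r. complex_of_real (s k) * tensor_vec d (u k) (v k) $ (i*d+j))"
      by (subst C) (simp add: idx_lt[OF ij])
    also have "\<dots> = (\<Sum>k<r. complex_of_real (s k) * u k $ i * v k $ j)"
      unfolding tensor_vec_def using idx_lt[OF ij] divmod_idx[of j d i] ij by (simp add: mult.assoc)
    finally show ?thesis .
  qed
  define N where "N = (\<lambda>i. \<Sum>k<r. (cmod (u k $ i))^2)"
  have Nc: "complex_of_real (N i) = (\<Sum>k<r. u k $ i * cnj (u k $ i))" for i
    unfolding N_def of_real_sum by (rule sum.cong) (simp_all only: complex_norm_square)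
  have N1: "N i = 1" if i: "i < d" "\<psi> $ i \<noteq> 0" for i
  proof -
    have a: "cnj (u l $ i) * \<psi> $ i = complex_of_real (s l) * v l $ i" if l: "l < r" for l
    proof -
      have "(\<Sum>m<d. cnj (u l $ m) * (if m = i then \<psi> $ m else 0)) = cnj (u l $ i) * \<psi> $ i"
        using i by (subst sum.cong[OF refl, of _ _ "\<lambda>m. if m = i then cnj (u l $ m) * \<psi> $ m else 0"]) auto
      moreover have "(\<Sum>m<d. cnj (u l $ m) * (if m = i then \<psi> $ m else 0))
          = (\<Sum>m<d. cnj (u l $ m) * (\<Sum>k<r. complex_of_real (s k) * u k $ m * v k $ i))"
        using Cij i by (intro sum.cong refl) auto
      moreover have "\<dots> = (\<Sum>k<r. complex_of_real (s k) * v k $ i * cinner d (u l) (u k))"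
        unfolding cinner_def sum_distrib_left
        by (subst sum.swap) (intro sum.cong refl, simp add: algebra_simps)
      moreover have "\<dots> = (\<Sum>k<r. if k = l then complex_of_real (s k) * v k $ i else 0)"
        using B l by (intro sum.cong refl) auto
      moreover have "\<dots> = complex_of_real (s l) * v l $ i" using l by simp
      ultimately show ?thesis by simp
    qed
    have "\<psi> $ i = (\<Sum>k<r. u k $ i * (complex_of_real (s k) * v k $ i))"
      using Cij[OF i(1) i(1)] by (simp add: algebra_simps)
    also have "\<dots> = (\<Sum>k<r. u k $ i * cnj (u k $ i)) * \<psi> $ i"
      unfolding sum_distrib_right by (rule sum.cong) (simp_all add: a[symmetric] algebra_simps)
    finally have "\<psi> $ i * 1 = \<psi> $ i * complex_of_real (N i)" unfolding Nc by (simp add: mult.commute)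
    hence "complex_of_real (N i) = 1" using i(2) by (metis mult_left_cancel)
    thus ?thesis by (metis of_real_eq_1_iff)
  qed
  define I where "I = {i. i < d \<and> \<psi> $ i \<noteq> 0}"
  have "real (superpos d \<psi>) = (\<Sum>i\<in>I. N i)" unfolding superpos_def I_def[symmetric]
    using N1 unfolding I_def by simp
  also have "\<dots> \<le> (\<Sum>i<d. N i)"
    by (rule sum_mono2) (auto simp: I_def N_def intro!: sum_nonneg)
  also have "\<dots> = (\<Sum>k<r. \<Sum>i<d. (cmod (u k $ i))^2)" unfolding N_def by (rule sum.swap)
  also have "\<dots> = (\<Sum>k<r. 1)"
  proof (rule sum.cong)
    fix k assume k: "k \<in> {..<r}"
    have "complex_of_real (\<Sum>i<d. (cmod (u k $ i))^2) = cinner d (u k) (u k)"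
      unfolding cinner_def of_real_sum by (rule sum.cong) (simp_all only: complex_norm_square mult.commute)
    also have "\<dots> = 1" using B k by auto
    finally show "(\<Sum>i<d. (cmod (u k $ i))^2) = 1" by (metis of_real_eq_1_iff)
  qed simp
  also have "\<dots> = real r" by simp
  finally show ?thesis by simp
qed

lemma schmidt_diag:
  assumes d: "0 < d"
  shows "schmidt_rank d (diagvec d \<psi>) = superpos d \<psi>"
  unfolding schmidt_rank_pred
  by (rule Least_equality[of "schmidt_pred d (diagvec d \<psi>)", OF schmidt_witness[OF d] schmidt_lower[OF d]])
lemma diagvec_idx2: "x < d*d \<Longrightarrow> diagvec d \<psi> $ x = (if x div d = x mod d then \<psi> $ (x div d) else 0)"
  unfolding diagvec_def by simp

lemma decomp_fwd:
  assumes d: "0 < d" and PD: "pure_decomp d \<rho> m p \<psi>"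
  shows "pure_decomp (d*d) (cd_output d \<rho>) m p (\<lambda>k. diagvec d (\<psi> k))"
proof -
  have m: "0 < m" and A: "\<forall>k<m. 0 < p k \<and> \<psi> k \<in> carrier_vec d \<and> cinner d (\<psi> k) (\<psi> k) = 1"
    and R: "\<rho> = mat d d (\<lambda>(i,j). \<Sum>k<m. complex_of_real (p k) * (\<psi> k $ i) * cnj (\<psi> k $ j))"
    using PD unfolding pure_decomp_def by auto
  have A': "\<forall>k<m. 0 < p k \<and> diagvec d (\<psi> k) \<in> carrier_vec (d*d)
      \<and> cinner (d*d) (diagvec d (\<psi> k)) (diagvec d (\<psi> k)) = 1"
    using A by (simp add: diagvec_carrier cinner_diagvec[OF d])
  have M: "cd_output d \<rho> = mat (d*d) (d*d) (\<lambda>(i,j). \<Sum>k<m. complex_of_real (p k) * (diagvec d (\<psi> k) $ i) * cnj (diagvec d (\<psi> k) $ j))"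
  proof (rule eq_matI)
    fix r c assume "r < dim_row (mat (d*d) (d*d) (\<lambda>(i,j). \<Sum>k<m. complex_of_real (p k) * (diagvec d (\<psi> k) $ i) * cnj (diagvec d (\<psi> k) $ j)))"
      "c < dim_col (mat (d*d) (d*d) (\<lambda>(i,j). \<Sum>k<m. complex_of_real (p k) * (diagvec d (\<psi> k) $ i) * cnj (diagvec d (\<psi> k) $ j)))"
    hence rc: "r < d*d" "c < d*d" by auto
    have "cd_output d \<rho> $$ (r,c) = (if r div d = r mod d \<and> c div d = c mod d then \<rho> $$ (r div d, c div d) else 0)"
      by (rule out_idx[OF d rc])
    also have "\<dots> = (\<Sum>k<m. complex_of_real (p k) * (diagvec d (\<psi> k) $ r) * cnj (diagvec d (\<psi> k) $ c))"
      unfolding diagvec_idx2[OF rc(1)] diagvec_idx2[OF rc(2)]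
      by (subst R) (auto simp: div_lt[OF rc(1)] div_lt[OF rc(2)] d)
    finally show "cd_output d \<rho> $$ (r,c) = mat (d*d) (d*d) (\<lambda>(i,j). \<Sum>k<m. complex_of_real (p k) * (diagvec d (\<psi> k) $ i) * cnj (diagvec d (\<psi> k) $ j)) $$ (r,c)"
      using rc by simp
  qed (auto simp: out_carrier[THEN carrier_matD(1)] out_carrier[THEN carrier_matD(2)])
  show ?thesis unfolding pure_decomp_def using m A' M by blast
qed

lemma decomp_bwd:
  assumes d: "0 < d" and C: "\<rho> \<in> carrier_mat d d" and PD: "pure_decomp (d*d) (cd_output d \<rho>) m p \<Psi>"
  defines "\<phi> \<equiv> (\<lambda>k. vec d (\<lambda>i. \<Psi> k $ (i*d+i)))"
  shows "\<forall>k<m. \<Psi> k = diagvec d (\<phi> k)" "pure_decomp d \<rho> m p \<phi>"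
proof -
  have m: "0 < m" and A: "\<forall>k<m. 0 < p k \<and> \<Psi> k \<in> carrier_vec (d*d) \<and> cinner (d*d) (\<Psi> k) (\<Psi> k) = 1"
    and R: "cd_output d \<rho> = mat (d*d) (d*d) (\<lambda>(i,j). \<Sum>k<m. complex_of_real (p k) * (\<Psi> k $ i) * cnj (\<Psi> k $ j))"
    using PD unfolding pure_decomp_def by auto
  have R': "cd_output d \<rho> $$ (r,c) = (\<Sum>k<m. complex_of_real (p k) * (\<Psi> k $ r) * cnj (\<Psi> k $ c))"
    if "r < d*d" "c < d*d" for r c
    using that by (subst R) simp
  have off: "\<Psi> k $ x = 0" if x: "x < d*d" "x div d \<noteq> x mod d" and k: "k < m" for x k
  proof -
    have "complex_of_real (\<Sum>k<m. p k * (cmod (\<Psi> k $ x))^2) = (\<Sum>k<m. complex_of_real (p k) * (\<Psi> k $ x) * cnj (\<Psi> k $ x))"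
      unfolding of_real_sum by (rule sum.cong) (simp_all only: of_real_mult complex_norm_square mult.assoc)
    also have "\<dots> = cd_output d \<rho> $$ (x,x)" using R'[OF x(1) x(1)] by simp
    also have "\<dots> = 0" using out_idx[OF d x(1) x(1)] x(2) by simp
    finally have "complex_of_real (\<Sum>k<m. p k * (cmod (\<Psi> k $ x))^2) = 0" .
    hence "(\<Sum>k<m. p k * (cmod (\<Psi> k $ x))^2) = 0" by (simp only: of_real_eq_0_iff)
    moreover have "\<forall>k\<in>{..<m}. 0 \<le> p k * (cmod (\<Psi> k $ x))^2" 
    proof
      fix k assume "k \<in> {..<m}"
      hence "0 < p k" using A by auto
      thus "0 \<le> p k * (cmod (\<Psi> k $ x))^2" by simp
    qed
    ultimately have "\<forall>k\<in>{..<m}. p k * (cmod (\<Psi> k $ x))^2 = 0"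
      using sum_nonneg_eq_0_iff[of "{..<m}" "\<lambda>k. p k * (cmod (\<Psi> k $ x))^2"] by simp
    hence "p k * (cmod (\<Psi> k $ x))^2 = 0" using k by simp
    thus ?thesis using A k by auto
  qed
  show eqs: "\<forall>k<m. \<Psi> k = diagvec d (\<phi> k)"
  proof (intro allI impI)
    fix k assume k: "k < m"
    show "\<Psi> k = diagvec d (\<phi> k)"
    proof (rule eq_vecI)
      show dims: "dim_vec (\<Psi> k) = dim_vec (diagvec d (\<phi> k))" using A k by (simp add: diagvec_def)
      fix x assume "x < dim_vec (diagvec d (\<phi> k))"
      hence x: "x < d*d" by (simp add: diagvec_def)
      show "\<Psi> k $ x = diagvec d (\<phi> k) $ x"
      proof (cases "x div d = x mod d")
        case True
        have "x = (x div d)*d + x div d" using True by (metis div_mult_mod_eq)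
        hence "\<Psi> k $ x = \<phi> k $ (x div d)" unfolding \<phi>_def using div_lt[OF x] by simp
        thus ?thesis using True diagvec_idx2[OF x] by simp
      next
        case False thus ?thesis using off[OF x False k] diagvec_idx2[OF x] by simp
      qed
    qed
  qed
  have A': "\<forall>k<m. 0 < p k \<and> \<phi> k \<in> carrier_vec d \<and> cinner d (\<phi> k) (\<phi> k) = 1"
  proof (intro allI impI conjI)
    fix k assume k: "k < m"
    show "0 < p k" using A k by auto
    show "\<phi> k \<in> carrier_vec d" unfolding \<phi>_def by simp
    have "cinner d (\<phi> k) (\<phi> k) = cinner (d*d) (\<Psi> k) (\<Psi> k)"
      using eqs k cinner_diagvec[OF d, of "\<phi> k" "\<phi> k"] by simp
    thus "cinner d (\<phi> k) (\<phi> k) = 1" using A k by simp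
  qed
  have M: "\<rho> = mat d d (\<lambda>(i,j). \<Sum>k<m. complex_of_real (p k) * (\<phi> k $ i) * cnj (\<phi> k $ j))"
  proof (rule eq_matI)
    fix i j assume "i < dim_row (mat d d (\<lambda>(i,j). \<Sum>k<m. complex_of_real (p k) * (\<phi> k $ i) * cnj (\<phi> k $ j)))"
      "j < dim_col (mat d d (\<lambda>(i,j). \<Sum>k<m. complex_of_real (p k) * (\<phi> k $ i) * cnj (\<phi> k $ j)))"
    hence ij: "i < d" "j < d" by auto
    have ii: "i*d+i < d*d" "j*d+j < d*d" using idx_lt ij by auto
    have "\<rho> $$ (i,j) = cd_output d \<rho> $$ (i*d+i, j*d+j)"
      using out_idx[OF d ii] divmod_idx[of i d i] divmod_idx[of j d j] ij by simp
    also have "\<dots> = (\<Sum>k<m. complex_of_real (p k) * (\<phi> k $ i) * cnj (\<phi> k $ j))"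
      using R'[OF ii] ij unfolding \<phi>_def by simp
    finally show "\<rho> $$ (i,j) = mat d d (\<lambda>(i,j). \<Sum>k<m. complex_of_real (p k) * (\<phi> k $ i) * cnj (\<phi> k $ j)) $$ (i,j)"
      using ij by simp
  qed (use C in auto)
  show "pure_decomp d \<rho> m p \<phi>" unfolding pure_decomp_def using m A' M by blast
qed

lemma superpos_pos:
  assumes "\<psi> \<in> carrier_vec d" "cinner d \<psi> \<psi> = 1"
  shows "1 \<le> superpos d \<psi>"
proof -
  have "\<exists>i<d. \<psi> $ i \<noteq> 0"
  proof (rule ccontr)
    assume "\<not> ?thesis"
    hence "cinner d \<psi> \<psi> = 0" unfolding cinner_def by simp
    thus False using assms(2) by simp
  qed
  then obtain i where "i < d" "\<psi> $ i \<noteq> 0" by blast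
  hence "{i. i < d \<and> \<psi> $ i \<noteq> 0} \<noteq> {}" by blast
  moreover have "finite {i. i < d \<and> \<psi> $ i \<noteq> 0}" by simp
  ultimately show ?thesis unfolding superpos_def
    by (simp add: Suc_leI card_gt_0_iff)
qed

lemma max_pos:
  assumes "pure_decomp d \<rho> m p \<psi>"
  shows "1 \<le> Max ((\<lambda>k. superpos d (\<psi> k)) ` {..<m})"
proof -
  have m: "0 < m" and A: "\<forall>k<m. \<psi> k \<in> carrier_vec d \<and> cinner d (\<psi> k) (\<psi> k) = 1"
    using assms unfolding pure_decomp_def by auto
  have "1 \<le> superpos d (\<psi> 0)" using A m superpos_pos by blast
  also have "\<dots> \<le> Max ((\<lambda>k. superpos d (\<psi> k)) ` {..<m})" using m by (intro Max_ge) auto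
  finally show ?thesis .
qed

lemma sets_eq:
  assumes d: "0 < d" and C: "\<rho> \<in> carrier_mat d d"
  shows "{Max ((\<lambda>k. schmidt_rank d (\<psi> k)) ` {..<m}) | m p \<psi>. pure_decomp (d*d) (cd_output d \<rho>) m p \<psi>}
       = {Max ((\<lambda>k. superpos d (\<psi> k)) ` {..<m}) | m p \<psi>. pure_decomp d \<rho> m p \<psi>}"
proof (intro equalityI subsetI)
  fix x assume "x \<in> {Max ((\<lambda>k. schmidt_rank d (\<psi> k)) ` {..<m}) | m p \<psi>. pure_decomp (d*d) (cd_output d \<rho>) m p \<psi>}"
  then obtain m p \<Psi> where x: "x = Max ((\<lambda>k. schmidt_rank d (\<Psi> k)) ` {..<m})"
    and PD: "pure_decomp (d*d) (cd_output d \<rho>) m p \<Psi>" by blast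
  define \<phi> where "\<phi> = (\<lambda>k. vec d (\<lambda>i. \<Psi> k $ (i*d+i)))"
  have B1: "\<forall>k<m. \<Psi> k = diagvec d (\<phi> k)" using decomp_bwd(1)[OF d C PD] unfolding \<phi>_def .
  have B2: "pure_decomp d \<rho> m p \<phi>" using decomp_bwd(2)[OF d C PD] unfolding \<phi>_def .
  have "(\<lambda>k. schmidt_rank d (\<Psi> k)) ` {..<m} = (\<lambda>k. superpos d (\<phi> k)) ` {..<m}"
    using B1 schmidt_diag[OF d] by (intro image_cong) auto
  hence "x = Max ((\<lambda>k. superpos d (\<phi> k)) ` {..<m})" using x by simp
  thus "x \<in> {Max ((\<lambda>k. superpos d (\<psi> k)) ` {..<m}) | m p \<psi>. pure_decomp d \<rho> m p \<psi>}"
    using x B2 by blast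
next
  fix x assume "x \<in> {Max ((\<lambda>k. superpos d (\<psi> k)) ` {..<m}) | m p \<psi>. pure_decomp d \<rho> m p \<psi>}"
  then obtain m p \<psi> where x: "x = Max ((\<lambda>k. superpos d (\<psi> k)) ` {..<m})"
    and PD: "pure_decomp d \<rho> m p \<psi>" by blast
  have "(\<lambda>k. schmidt_rank d (diagvec d (\<psi> k))) ` {..<m} = (\<lambda>k. superpos d (\<psi> k)) ` {..<m}"
    using schmidt_diag[OF d] by simp
  hence xx: "x = Max ((\<lambda>k. schmidt_rank d (diagvec d (\<psi> k))) ` {..<m})" using x by simp
  show "x \<in> {Max ((\<lambda>k. schmidt_rank d (\<psi> k)) ` {..<m}) | m p \<psi>. pure_decomp (d*d) (cd_output d \<rho>) m p \<psi>}"
    unfolding mem_Collect_eq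
    by (rule exI[of _ m], rule exI[of _ p], rule exI[of _ "\<lambda>k. diagvec d (\<psi> k)"])
       (use xx decomp_fwd[OF d PD] in simp)
qed

theorem mainTheorem10:
  fixes d :: nat and \<rho> :: "complex mat"
  assumes "density d \<rho>"
  shows "S_N d (cd_output d \<rho>) = N_S d \<rho>
    \<and> (S_N d (cd_output d \<rho>) > 1 \<longleftrightarrow> N_S d \<rho> \<noteq> 1)
    \<and> (\<forall>M. hermitian d M \<and> Re (mtrace (M * \<rho>)) > Max {Re (M $$ (i,i)) | i. i < d}
          \<longrightarrow> S_N d (cd_output d \<rho>) > 1)"
proof -
  note den = assms
  have d: "0 < d" by (rule density_d_pos[OF den])
  have C: "\<rho> \<in> carrier_mat d d" by (rule density_carrier[OF den])
  define SN where "SN = {Max ((\<lambda>k. superpos d (\<psi> k)) ` {..<m}) | m p \<psi>. pure_decomp d \<rho> m p \<psi>}"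
  have eq: "S_N d (cd_output d \<rho>) = N_S d \<rho>"
    unfolding S_N_def N_S_def sets_eq[OF d C] ..
  have ne: "SN \<noteq> {}" using density_decomp[OF den] unfolding SN_def by blast
  have mem: "N_S d \<rho> \<in> SN" unfolding N_S_def SN_def[symmetric] using ne by (rule Inf_nat_def1)
  have ge1: "1 \<le> N_S d \<rho>"
  proof -
    obtain m p \<psi> where "N_S d \<rho> = Max ((\<lambda>k. superpos d (\<psi> k)) ` {..<m})" "pure_decomp d \<rho> m p \<psi>"
      using mem unfolding SN_def by blast
    thus ?thesis using max_pos by simp
  qed
  have third: "S_N d (cd_output d \<rho>) > 1"
    if M: "hermitian d M" "Re (mtrace (M * \<rho>)) > Max {Re (M $$ (i,i)) | i. i < d}" for M
  proof (rule ccontr)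
    assume "\<not> ?thesis"
    hence N1: "N_S d \<rho> = 1" using eq ge1 by simp
    then obtain m p \<psi> where PD: "pure_decomp d \<rho> m p \<psi>"
      and mx: "Max ((\<lambda>k. superpos d (\<psi> k)) ` {..<m}) = 1" using mem unfolding SN_def by auto
    have MC: "M \<in> carrier_mat d d" using M(1) unfolding hermitian_def by blast
    have A: "\<forall>k<m. 0 < p k \<and> \<psi> k \<in> carrier_vec d \<and> cinner d (\<psi> k) (\<psi> k) = 1"
      and R: "\<rho> = mat d d (\<lambda>(i,j). \<Sum>k<m. complex_of_real (p k) * (\<psi> k $ i) * cnj (\<psi> k $ j))"
      using PD unfolding pure_decomp_def by auto
    have R': "\<rho> $$ (i,j) = (\<Sum>k<m. complex_of_real (p k) * (\<psi> k $ i) * cnj (\<psi> k $ j))"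
      if "i < d" "j < d" for i j using that by (subst R) simp
    have sp: "superpos d (\<psi> k) \<le> 1" if "k < m" for k
      using that mx by (metis Max_ge finite_imageI finite_lessThan image_eqI lessThan_iff)
    have offz: "\<rho> $$ (i,j) = 0" if ij: "i < d" "j < d" "i \<noteq> j" for i j
    proof -
      have "\<psi> k $ i * cnj (\<psi> k $ j) = 0" if k: "k < m" for k
      proof (rule ccontr)
        assume "\<psi> k $ i * cnj (\<psi> k $ j) \<noteq> 0"
        hence "{i, j} \<subseteq> {l. l < d \<and> \<psi> k $ l \<noteq> 0}" using ij by auto
        hence "card {i, j} \<le> superpos d (\<psi> k)" unfolding superpos_def by (intro card_mono) auto
        thus False using sp[OF k] ij(3) by simp
      qed
      hence "\<forall>k\<in>{..<m}. complex_of_real (p k) * (\<psi> k $ i) * cnj (\<psi> k $ j) = 0"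
        by (simp add: mult.assoc)
      hence "(\<Sum>k<m. complex_of_real (p k) * (\<psi> k $ i) * cnj (\<psi> k $ j)) = 0" by (rule sum.neutral)
      thus ?thesis using R'[OF ij(1,2)] by simp
    qed
    define q where "q = (\<lambda>i. \<Sum>k<m. p k * (cmod (\<psi> k $ i))^2)"
    have qd: "\<rho> $$ (i,i) = complex_of_real (q i)" if "i < d" for i
      unfolding R'[OF that that] q_def of_real_sum
      by (rule sum.cong) (simp_all only: of_real_mult complex_norm_square mult.assoc)
    have q0: "0 \<le> q i" for i unfolding q_def using A by (auto intro!: sum_nonneg simp: less_imp_le)
    have qs: "(\<Sum>i<d. q i) = 1"
    proof -
      have "complex_of_real (\<Sum>i<d. q i) = mtrace \<rho>"
        unfolding mtrace_def of_real_sum using C qd by simp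
      also have "\<dots> = 1" using den unfolding density_def by simp
      finally show ?thesis by (simp only: of_real_eq_1_iff)
    qed
    define Mx where "Mx = Max {Re (M $$ (i,i)) | i. i < d}"
    have Mset: "{Re (M $$ (i,i)) | i. i < d} = (\<lambda>i. Re (M $$ (i,i))) ` {..<d}" by auto
    have Mle: "Re (M $$ (i,i)) \<le> Mx" if "i < d" for i
      unfolding Mx_def Mset using that by (intro Max_ge) auto
    have "mtrace (M * \<rho>) = (\<Sum>i<d. \<Sum>j<d. M $$ (i,j) * \<rho> $$ (j,i))"
    proof -
      have dr: "dim_row (M * \<rho>) = d" using MC by simp
      show ?thesis unfolding mtrace_def dr
        by (rule sum.cong[OF refl], rule mult_entry[OF MC C]) auto
    qed
    also have "\<dots> = (\<Sum>i<d. M $$ (i,i) * complex_of_real (q i))"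
    proof (rule sum.cong)
      fix i assume i: "i \<in> {..<d}"
      have "(\<Sum>j<d. M $$ (i,j) * \<rho> $$ (j,i)) = (\<Sum>j<d. if j = i then M $$ (i,j) * \<rho> $$ (j,i) else 0)"
        using offz i by (intro sum.cong) auto
      also have "\<dots> = M $$ (i,i) * complex_of_real (q i)" using i qd by simp
      finally show "(\<Sum>j<d. M $$ (i,j) * \<rho> $$ (j,i)) = M $$ (i,i) * complex_of_real (q i)" .
    qed simp
    finally have "Re (mtrace (M * \<rho>)) = (\<Sum>i<d. Re (M $$ (i,i)) * q i)" by (simp add: Re_sum)
    also have "\<dots> \<le> (\<Sum>i<d. Mx * q i)" using Mle q0 by (intro sum_mono mult_right_mono) auto
    also have "\<dots> = Mx" using qs by (simp add: sum_distrib_left[symmetric])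
    finally show False using M(2) unfolding Mx_def by simp
  qed
  show ?thesis using eq ge1 third by auto
qed

end
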